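(* Let $g(\mathbf{x})=\pi\,\phi_1(\mathbf{x})+(1-\pi)\,\phi_2(\mathbf{x})$, $\mathbf{x}\in\mathbb{R}^D$, be a mixture of two multivariate normal densities $\phi_j(\mathbf{x})=\phi(\mathbf{x};\boldsymbol{\mu}_j,\Sigma_j)$. Then for $\alpha\in[0,1]$, $$\kappa(\alpha)=[p(\alpha)]^2\,[1-\alpha\bar\alpha\,p(\alpha)],$$ where $\bar\alpha=1-\alpha$ and $p(\alpha)=(\boldsymbol{\mu}_2-\boldsymbol{\mu}_1)'\Sigma_1^{-1}S_\alpha^{-1}\Sigma_2^{-1}S_\alpha^{-1}\Sigma_2^{-1}S_\alpha^{-1}\Sigma_1^{-1}(\boldsymbol{\mu}_2-\boldsymbol{\mu}_1)$.
   Context: $\phi(\mathbf{x};\boldsymbol{\mu},\Sigma)$ is the normal density with mean $\boldsymbol{\mu}$ and positive definite covariance $\Sigma$. $S_\alpha=\bar\alpha\Sigma_1^{-1}+\alpha\Sigma_2^{-1}$, and the ridgeline is $\mathbf{x}^*(\alpha)=S_\alpha^{-1}[\bar\alpha\Sigma_1^{-1}\boldsymbol{\mu}_1+\alpha\Sigma_2^{-1}\boldsymbol{\mu}_2]$. Write $\phi_j(\alpha)=\phi_j(\mathbf{x}^*(\alpha))$, with primes denoting derivatives in $\alpha$. The curvature function is $$\kappa(\alpha)=\frac{\phi_2''(\alpha)\phi_1'(\alpha)}{\phi_2(\alpha)\phi_1(\alpha)}-\frac{\phi_1''(\alpha)\phi_2'(\alpha)}{\phi_1(\alpha)\phi_2(\alpha)}.$$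 *)

theory Defs
  imports "HOL-Analysis.Analysis"
begin

definition pos_def_mat :: "real^'n^'n \<Rightarrow> bool" where
  "pos_def_mat A \<longleftrightarrow> transpose A = A \<and> (\<forall>x. x \<noteq> 0 \<longrightarrow> x \<bullet> (A *v x) > 0)"

definition normal_density :: "real^'n \<Rightarrow> real^'n \<Rightarrow> real^'n^'n \<Rightarrow> real" where
  "normal_density x mu Sig =
     (2 * pi) powr (- real CARD('n) / 2) * (det Sig) powr (-1/2) *
     exp (- (1/2) * ((x - mu) \<bullet> (matrix_inv Sig *v (x - mu))))"

definition S_mat :: "real^'n^'n \<Rightarrow> real^'n^'n \<Rightarrow> real \<Rightarrow> real^'n^'n" where
  "S_mat Sig1 Sig2 a = (1 - a) *\<^sub>R matrix_inv Sig1 + a *\<^sub>R matrix_inv Sig2"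

definition ridgeline :: "real^'n \<Rightarrow> real^'n^'n \<Rightarrow> real^'n \<Rightarrow> real^'n^'n \<Rightarrow> real \<Rightarrow> real^'n" where
  "ridgeline mu1 Sig1 mu2 Sig2 a =
     matrix_inv (S_mat Sig1 Sig2 a) *v
       ((1 - a) *\<^sub>R (matrix_inv Sig1 *v mu1) + a *\<^sub>R (matrix_inv Sig2 *v mu2))"

definition phi_ridge :: "real^'n \<Rightarrow> real^'n^'n \<Rightarrow> real^'n \<Rightarrow> real^'n^'n \<Rightarrow> real^'n \<Rightarrow> real^'n^'n \<Rightarrow> real \<Rightarrow> real" where
  "phi_ridge mu1 Sig1 mu2 Sig2 mu Sig a =
     normal_density (ridgeline mu1 Sig1 mu2 Sig2 a) mu Sig"

definition kappa :: "real^'n \<Rightarrow> real^'n^'n \<Rightarrow> real^'n \<Rightarrow> real^'n^'n \<Rightarrow> real \<Rightarrow> real" where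
  "kappa mu1 Sig1 mu2 Sig2 a =
     (let f1 = phi_ridge mu1 Sig1 mu2 Sig2 mu1 Sig1;
          f2 = phi_ridge mu1 Sig1 mu2 Sig2 mu2 Sig2
      in deriv (deriv f2) a * deriv f1 a / (f2 a * f1 a)
         - deriv (deriv f1) a * deriv f2 a / (f1 a * f2 a))"

end

theory Submission
  imports Defs
begin

lemma inv_works:
  fixes M :: "real^'n^'n"
  assumes "invertible M"
  shows "M ** matrix_inv M = mat 1" "matrix_inv M ** M = mat 1"
proof -
  from assms obtain M' where "M ** M' = mat 1 \<and> M' ** M = mat 1" unfolding invertible_def by blast
  then have "M ** matrix_inv M = mat 1 \<and> matrix_inv M ** M = mat 1"
    unfolding matrix_inv_def by (rule someI)
  then show "M ** matrix_inv M = mat 1" "matrix_inv M ** M = mat 1" by auto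
qed

lemma inv_vec:
  fixes M :: "real^'n^'n"
  assumes "invertible M"
  shows "M *v (matrix_inv M *v y) = y" "matrix_inv M *v (M *v y) = y"
  by (simp_all add: matrix_vector_mul_assoc inv_works[OF assms])

lemma invertible_ker:
  fixes M :: "real^'n^'n"
  assumes "\<And>x. M *v x = 0 \<Longrightarrow> x = 0"
  shows "invertible M"
  using assms matrix_left_invertible_ker invertible_left_inverse by blast

lemma sym_dot:
  fixes M :: "real^'n^'n"
  assumes "transpose M = M"
  shows "x \<bullet> (M *v y) = (M *v x) \<bullet> y"
  by (metis assms dot_lmul_matrix transpose_matrix_vector)

lemma inv_sym:
  fixes M :: "real^'n^'n"
  assumes "invertible M" "transpose M = M"
  shows "transpose (matrix_inv M) = matrix_inv M"
proof -
  have "transpose (matrix_inv M) ** M = mat 1"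
    by (metis assms(2) inv_works(1)[OF assms(1)] matrix_transpose_mul transpose_mat)
  then have "transpose (matrix_inv M) = transpose (matrix_inv M) ** (M ** matrix_inv M)"
    by (simp add: inv_works[OF assms(1)])
  also have "\<dots> = matrix_inv M"
    by (simp add: matrix_mul_assoc \<open>transpose (matrix_inv M) ** M = mat 1\<close>)
  finally show ?thesis .
qed

lemma matbound:
  fixes L :: "real^'n^'m"
  shows "\<exists>K>0. \<forall>x. norm (L *v x) \<le> K * norm x"
proof -
  obtain K where "K > 0" "\<And>x. norm (L *v x) \<le> norm x * K"
    using bounded_linear.pos_bounded[OF matrix_vector_mul_bounded_linear[of L]] by blast
  then show ?thesis by (metis mult.commute)
qed

lemma pd_inv:
  fixes Sig :: "real^'n^'n"
  assumes "pos_def_mat Sig"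
  shows "invertible Sig" "transpose (matrix_inv Sig) = matrix_inv Sig"
    "\<And>x. x \<noteq> 0 \<Longrightarrow> x \<bullet> (matrix_inv Sig *v x) > 0"
proof -
  have sy: "transpose Sig = Sig" and pd: "\<And>x. x \<noteq> 0 \<Longrightarrow> x \<bullet> (Sig *v x) > 0"
    using assms unfolding pos_def_mat_def by auto
  show inv: "invertible Sig"
  proof (rule invertible_ker)
    fix x :: "real^'n" assume "Sig *v x = 0"
    then show "x = 0" using pd[of x] by (cases "x = 0") auto
  qed
  show "transpose (matrix_inv Sig) = matrix_inv Sig" by (rule inv_sym[OF inv sy])
  fix x :: "real^'n" assume "x \<noteq> 0"
  define z where "z = matrix_inv Sig *v x"
  have x: "x = Sig *v z" unfolding z_def by (simp add: inv_vec[OF inv])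
  then have "z \<noteq> 0" using \<open>x \<noteq> 0\<close> by auto
  have "x \<bullet> (matrix_inv Sig *v x) = x \<bullet> z" by (simp add: z_def)
  also have "\<dots> = (Sig *v z) \<bullet> z" by (simp only: x[symmetric])
  also have "\<dots> = z \<bullet> (Sig *v z)" by (simp add: inner_commute)
  finally show "x \<bullet> (matrix_inv Sig *v x) > 0" using pd[OF \<open>z \<noteq> 0\<close>] by simp
qed


lemma vd_quot:
  fixes f :: "real \<Rightarrow> 'b::real_normed_vector"
  shows "(f has_vector_derivative D) (at x) \<longleftrightarrow> ((\<lambda>y. (f y - f x) /\<^sub>R (y - x)) \<longlongrightarrow> D) (at x)"
proof -
  have ev: "\<forall>\<^sub>F y in at x. norm ((f y - f x) /\<^sub>R (y - x) - D) = norm ((f y - f x - (y - x) *\<^sub>R D) /\<^sub>R norm (y - x))"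
  proof (rule eventually_at_filter[THEN iffD2], rule always_eventually, intro allI impI)
    fix y assume "y \<noteq> x" "y \<in> UNIV"
    then have ne: "y - x \<noteq> 0" by simp
    have "(f y - f x - (y - x) *\<^sub>R D) /\<^sub>R (y - x) = (f y - f x) /\<^sub>R (y - x) - D"
      using ne by (simp add: scaleR_diff_right)
    then have "(f y - f x) /\<^sub>R (y - x) - D = (f y - f x - (y - x) *\<^sub>R D) /\<^sub>R (y - x)" by simp
    then show "norm ((f y - f x) /\<^sub>R (y - x) - D) = norm ((f y - f x - (y - x) *\<^sub>R D) /\<^sub>R norm (y - x))"
      by simp
  qed
  have "(f has_vector_derivative D) (at x) \<longleftrightarrow>
      ((\<lambda>y. (f y - f x - (y - x) *\<^sub>R D) /\<^sub>R norm (y - x)) \<longlongrightarrow> 0) (at x)"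
    unfolding has_vector_derivative_def has_derivative_at_within
    by (simp add: bounded_linear_scaleR_left)
  also have "\<dots> \<longleftrightarrow> ((\<lambda>y. norm ((f y - f x - (y - x) *\<^sub>R D) /\<^sub>R norm (y - x))) \<longlongrightarrow> 0) (at x)"
    by (rule tendsto_norm_zero_iff[symmetric])
  also have "\<dots> \<longleftrightarrow> ((\<lambda>y. norm ((f y - f x) /\<^sub>R (y - x) - D)) \<longlongrightarrow> 0) (at x)"
    by (rule filterlim_cong[OF refl refl]) (use ev in \<open>simp add: eq_commute\<close>)
  also have "\<dots> \<longleftrightarrow> ((\<lambda>y. (f y - f x) /\<^sub>R (y - x) - D) \<longlongrightarrow> 0) (at x)"
    by (rule tendsto_norm_zero_iff)
  also have "\<dots> \<longleftrightarrow> ((\<lambda>y. (f y - f x) /\<^sub>R (y - x)) \<longlongrightarrow> D) (at x)"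
    by (rule LIM_zero_iff)
  finally show ?thesis .
qed

lemma mv_affine:
  fixes M0 N :: "real^'n^'n"
  shows "(M0 + s *\<^sub>R N) *v x = M0 *v x + s *\<^sub>R (N *v x)"
  by (simp add: matrix_vector_mult_add_rdistrib scaleR_matrix_vector_assoc)

lemma mv_neg:
  fixes A :: "real^'n^'m"
  shows "A *v (- x) = - (A *v x)"
  by (metis diff_0 matrix_vector_mult_diff_distrib matrix_vector_mult_0_right)

lemma inv_near:
  fixes M0 N :: "real^'n^'n"
  assumes inv: "invertible (M0 + a *\<^sub>R N)"
  shows "\<exists>e>0. \<forall>s. \<bar>s - a\<bar> < e \<longrightarrow> invertible (M0 + s *\<^sub>R N)"
proof -
  define Q where "Q = matrix_inv (M0 + a *\<^sub>R N)"
  obtain K where K: "K > 0" "\<And>x. norm ((Q ** N) *v x) \<le> K * norm x" using matbound by blast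
  show ?thesis
  proof (intro exI[of _ "1/K"] conjI allI impI)
    show "1/K > 0" using K by simp
    fix s assume s: "\<bar>s - a\<bar> < 1/K"
    show "invertible (M0 + s *\<^sub>R N)"
    proof (rule invertible_ker, rule ccontr)
      fix x :: "real^'n" assume h: "(M0 + s *\<^sub>R N) *v x = 0" and nz: "x \<noteq> 0"
      have "(M0 + a *\<^sub>R N) *v x = (M0 + s *\<^sub>R N) *v x - (s - a) *\<^sub>R (N *v x)"
        by (simp only: mv_affine) (simp add: algebra_simps)
      then have "(M0 + a *\<^sub>R N) *v x = - ((s - a) *\<^sub>R (N *v x))" using h by simp
      then have "x = Q *v (- ((s - a) *\<^sub>R (N *v x)))"
        by (metis Q_def inv_vec(2)[OF inv])
      also have "\<dots> = - ((s - a) *\<^sub>R ((Q ** N) *v x))"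
        by (simp add: mv_neg matrix_vector_mult_scaleR matrix_vector_mul_assoc)
      finally have "norm x = \<bar>s - a\<bar> * norm ((Q ** N) *v x)" by (metis norm_minus_cancel norm_scaleR)
      also have "\<dots> \<le> \<bar>s - a\<bar> * (K * norm x)" by (rule mult_left_mono[OF K(2)]) simp
      also have "\<dots> < (1/K) * (K * norm x)"
        by (rule mult_strict_right_mono[OF s]) (use K nz in simp)
      also have "\<dots> = norm x" using K by simp
      finally show False by simp
    qed
  qed
qed


lemma inv_deriv:
  fixes M0 N :: "real^'n^'n" and k :: "real \<Rightarrow> real^'n"
  assumes inv: "invertible (M0 + a *\<^sub>R N)" and kd: "(k has_vector_derivative K) (at a)"
  shows "((\<lambda>s. matrix_inv (M0 + s *\<^sub>R N) *v k s) has_vector_derivative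
     matrix_inv (M0 + a *\<^sub>R N) *v (K - N *v (matrix_inv (M0 + a *\<^sub>R N) *v k a))) (at a)"
proof -
  obtain e where e: "e > 0" "\<And>s. \<bar>s - a\<bar> < e \<Longrightarrow> invertible (M0 + s *\<^sub>R N)"
    using inv_near[OF inv] by blast
  define Q where "Q = matrix_inv (M0 + a *\<^sub>R N)"
  define L where "L = Q ** N"
  define w where "w = (\<lambda>s. matrix_inv (M0 + s *\<^sub>R N) *v k s)"
  obtain K0 where K0: "K0 > 0" "\<And>x. norm (L *v x) \<le> K0 * norm x" using matbound by blast
  have key: "w s = Q *v k s - (s - a) *\<^sub>R (L *v w s)" if s: "\<bar>s - a\<bar> < e" for s
  proof -
    have Mw: "(M0 + s *\<^sub>R N) *v w s = k s" unfolding w_def by (rule inv_vec(1)[OF e(2)[OF s]])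
    have "(M0 + a *\<^sub>R N) *v w s = (M0 + s *\<^sub>R N) *v w s - (s - a) *\<^sub>R (N *v w s)"
      by (simp only: mv_affine) (simp add: algebra_simps)
    also have "\<dots> = k s - (s - a) *\<^sub>R (N *v w s)" by (simp add: Mw)
    finally have "w s = Q *v (k s - (s - a) *\<^sub>R (N *v w s))"
      by (metis Q_def inv_vec(2)[OF inv])
    then show ?thesis
      by (simp add: L_def matrix_vector_mult_diff_distrib matrix_vector_mult_scaleR matrix_vector_mul_assoc)
  qed
  have wa: "w a = Q *v k a" unfolding w_def Q_def ..
  define r where "r = (\<lambda>s. Q *v (k s - k a) - (s - a) *\<^sub>R (L *v w a))"
  have eq: "w s - w a = r s - (s - a) *\<^sub>R (L *v (w s - w a))" if s: "\<bar>s - a\<bar> < e" for s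
  proof -
    have "w s - w a = Q *v k s - (s - a) *\<^sub>R (L *v w s) - Q *v k a"
      using key[OF s] wa by simp
    then show ?thesis unfolding r_def
      by (simp add: matrix_vector_mult_diff_distrib algebra_simps)
  qed
  have kc: "(k \<longlongrightarrow> k a) (at a)"
    using has_vector_derivative_continuous[OF kd] by (simp add: isCont_def)
  have r0: "(r \<longlongrightarrow> 0) (at a)"
  proof -
    have "((\<lambda>s. Q *v (k s - k a) - (s - a) *\<^sub>R (L *v w a)) \<longlongrightarrow> Q *v (k a - k a) - (a - a) *\<^sub>R (L *v w a)) (at a)"
      by (intro tendsto_intros bounded_linear.tendsto[OF matrix_vector_mul_bounded_linear] kc)
    then show ?thesis unfolding r_def by simp
  qed
  have cont: "((\<lambda>s. w s - w a) \<longlongrightarrow> 0) (at a)"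
  proof (rule tendsto_0_le[OF r0, of _ 2])
    have ev: "\<forall>\<^sub>F s in at a. \<bar>s - a\<bar> < min e (1 / (2 * K0))"
      using eventually_at_ball'[of "min e (1 / (2 * K0))" a UNIV] e K0
      by (auto simp: dist_real_def elim!: eventually_mono)
    show "\<forall>\<^sub>F s in at a. norm (w s - w a) \<le> norm (r s) * 2"
    proof (rule eventually_mono[OF ev])
      fix s assume s: "\<bar>s - a\<bar> < min e (1 / (2 * K0))"
      have "norm (w s - w a) \<le> norm (r s) + norm ((s - a) *\<^sub>R (L *v (w s - w a)))"
        using eq[of s] s norm_triangle_ineq4[of "r s" "(s - a) *\<^sub>R (L *v (w s - w a))"] by simp
      also have "norm ((s - a) *\<^sub>R (L *v (w s - w a))) \<le> \<bar>s - a\<bar> * (K0 * norm (w s - w a))"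
        using K0(2) by (simp add: mult_left_mono)
      also have "\<dots> \<le> (1 / (2 * K0)) * (K0 * norm (w s - w a))"
        using s K0 by (intro mult_right_mono) auto
      also have "\<dots> = norm (w s - w a) / 2" using K0 by simp
      finally show "norm (w s - w a) \<le> norm (r s) * 2" by simp
    qed
  qed
  have lim: "((\<lambda>s. (w s - w a) /\<^sub>R (s - a)) \<longlongrightarrow> Q *v K - L *v w a - L *v 0) (at a)"
  proof -
    have kq: "((\<lambda>s. (k s - k a) /\<^sub>R (s - a)) \<longlongrightarrow> K) (at a)" using kd vd_quot by blast
    have "((\<lambda>s. Q *v ((k s - k a) /\<^sub>R (s - a)) - L *v w a - L *v (w s - w a)) \<longlongrightarrow> Q *v K - L *v w a - L *v 0) (at a)"
      by (intro tendsto_intros bounded_linear.tendsto[OF matrix_vector_mul_bounded_linear] kq cont)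
    moreover have "\<forall>\<^sub>F s in at a. Q *v ((k s - k a) /\<^sub>R (s - a)) - L *v w a - L *v (w s - w a) = (w s - w a) /\<^sub>R (s - a)"
    proof -
      have ev: "\<forall>\<^sub>F s in at a. \<bar>s - a\<bar> < e \<and> s \<noteq> a"
        using eventually_at_ball'[of e a UNIV] e
        by (auto simp: dist_real_def elim!: eventually_mono)
      show ?thesis
      proof (rule eventually_mono[OF ev])
        fix s assume s: "\<bar>s - a\<bar> < e \<and> s \<noteq> a"
        then have ne: "s - a \<noteq> 0" by simp
        have "(w s - w a) /\<^sub>R (s - a) = (r s - (s - a) *\<^sub>R (L *v (w s - w a))) /\<^sub>R (s - a)"
          using eq[of s] s by simp
        also have "\<dots> = r s /\<^sub>R (s - a) - L *v (w s - w a)"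
          using ne by (simp only: scaleR_diff_right scaleR_scaleR) simp
        also have "r s /\<^sub>R (s - a) = Q *v ((k s - k a) /\<^sub>R (s - a)) - L *v w a"
        proof -
          have "r s /\<^sub>R (s - a) = (Q *v (k s - k a)) /\<^sub>R (s - a) - L *v w a"
            using ne unfolding r_def by (simp only: scaleR_diff_right scaleR_scaleR) simp
          moreover have "Q *v ((k s - k a) /\<^sub>R (s - a)) = (Q *v (k s - k a)) /\<^sub>R (s - a)"
            by (rule matrix_vector_mult_scaleR)
          ultimately show ?thesis by simp
        qed
        finally show "Q *v ((k s - k a) /\<^sub>R (s - a)) - L *v w a - L *v (w s - w a) = (w s - w a) /\<^sub>R (s - a)" by simp
      qed
    qed
    ultimately show ?thesis by (rule Lim_transform_eventually)
  qed
  have "Q *v K - L *v w a - L *v 0 = Q *v (K - N *v (Q *v k a))"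
    by (simp add: L_def wa matrix_vector_mult_diff_distrib matrix_vector_mul_assoc matrix_mul_assoc)
  then have "(w has_vector_derivative Q *v (K - N *v (Q *v k a))) (at a)"
    using lim vd_quot by metis
  then show ?thesis unfolding w_def Q_def .
qed


lemma transpose_lin:
  fixes M N :: "real^'n^'n"
  shows "transpose (M + s *\<^sub>R N) = transpose M + s *\<^sub>R transpose N"
    "transpose (M - N) = transpose M - transpose N"
  by (simp_all add: transpose_def vec_eq_iff)

lemma ridge_alg:
  fixes A B :: "real^'n^'n" and mu1 mu2 :: "real^'n" and s :: real
  assumes sA: "transpose A = A" and sB: "transpose B = B"
    and inv: "invertible (A + s *\<^sub>R (B - A))"
  defines "P \<equiv> matrix_inv (A + s *\<^sub>R (B - A))"
  defines "x \<equiv> P *v ((1 - s) *\<^sub>R (A *v mu1) + s *\<^sub>R (B *v mu2))"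
  defines "X \<equiv> P *v ((B *v mu2 - A *v mu1) - (B - A) *v x)"
  defines "p \<equiv> (mu2 - mu1) \<bullet> ((A ** P ** B ** P ** B ** P ** A) *v (mu2 - mu1))"
  shows "X \<bullet> (A *v (x - mu1)) = s * p" and "X \<bullet> (B *v (x - mu2)) = - (1 - s) * p"
proof -
  define S where "S = A + s *\<^sub>R (B - A)"
  define d where "d = mu2 - mu1"
  have SP: "\<And>y. S *v (P *v y) = y" and PS: "\<And>y. P *v (S *v y) = y"
    using inv_vec[OF inv] unfolding S_def P_def by auto
  have sS: "transpose S = S" unfolding S_def by (simp add: transpose_lin sA sB)
  have sP: "transpose P = P" unfolding P_def using inv_sym[OF inv] sS S_def by simp
  have Sv: "\<And>v. S *v v = A *v v + s *\<^sub>R (B *v v - A *v v)"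
    unfolding S_def by (simp add: mv_affine matrix_vector_mult_diff_rdistrib)
  have Sx: "S *v x = (1 - s) *\<^sub>R (A *v mu1) + s *\<^sub>R (B *v mu2)" unfolding x_def by (rule SP)
  define h where "h = B *v (P *v (A *v d))"
  have i: "x - mu2 = - (1 - s) *\<^sub>R (P *v (A *v d))"
  proof -
    have "S *v (x - mu2) = - (1 - s) *\<^sub>R (A *v d)"
      using Sx unfolding d_def
      by (simp add: matrix_vector_mult_diff_distrib Sv algebra_simps)
    then have "P *v (S *v (x - mu2)) = P *v (- (1 - s) *\<^sub>R (A *v d))" by simp
    then show ?thesis by (simp add: PS matrix_vector_mult_scaleR)
  qed
  have ii: "A *v (x - mu1) - B *v (x - mu2) = h"
  proof -
    have "x - mu1 = (x - mu2) + d" unfolding d_def by simp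
    then have e1: "A *v (x - mu1) = A *v (x - mu2) + A *v d"
      by (metis matrix_vector_right_distrib)
    then have "A *v (x - mu1) - B *v (x - mu2) = A *v d - (B *v (x - mu2) - A *v (x - mu2))"
      by simp
    also have "\<dots> = A *v d + (1 - s) *\<^sub>R (B *v (P *v (A *v d)) - A *v (P *v (A *v d)))"
      unfolding i by (simp add: matrix_vector_mult_scaleR mv_neg algebra_simps)
    also have "\<dots> = S *v (P *v (A *v d)) + (1 - s) *\<^sub>R (B *v (P *v (A *v d)) - A *v (P *v (A *v d)))"
      by (simp add: SP)
    also have "\<dots> = h" unfolding h_def Sv by (simp add: algebra_simps)
    finally show ?thesis .
  qed
  have iii: "(1 - s) *\<^sub>R (A *v (x - mu1)) + s *\<^sub>R (B *v (x - mu2)) = 0"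
  proof -
    have "(1 - s) *\<^sub>R (A *v (x - mu1)) + s *\<^sub>R (B *v (x - mu2)) =
        S *v x - ((1 - s) *\<^sub>R (A *v mu1) + s *\<^sub>R (B *v mu2))"
      by (simp add: Sv matrix_vector_mult_diff_distrib algebra_simps)
    then show ?thesis using Sx by simp
  qed
  have g1: "A *v (x - mu1) = s *\<^sub>R h" and g2: "B *v (x - mu2) = - (1 - s) *\<^sub>R h"
  proof -
    have "A *v (x - mu1) = (1 - s) *\<^sub>R (A *v (x - mu1)) + s *\<^sub>R (B *v (x - mu2)) + s *\<^sub>R (A *v (x - mu1) - B *v (x - mu2))"
      by (simp add: algebra_simps)
    then show g1: "A *v (x - mu1) = s *\<^sub>R h" using iii ii by simp
    have "B *v (x - mu2) = A *v (x - mu1) - (A *v (x - mu1) - B *v (x - mu2))" by simp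
    then show "B *v (x - mu2) = - (1 - s) *\<^sub>R h" using g1 ii by (simp add: algebra_simps)
  qed
  have v: "X = P *v h"
  proof -
    have "(B *v mu2 - A *v mu1) - (B - A) *v x = A *v (x - mu1) - B *v (x - mu2)"
      by (simp add: matrix_vector_mult_diff_distrib matrix_vector_mult_diff_rdistrib algebra_simps)
    then show ?thesis unfolding X_def using ii by simp
  qed
  have vi: "p = h \<bullet> (P *v h)"
  proof -
    have "p = d \<bullet> (A *v (P *v (B *v (P *v (B *v (P *v (A *v d)))))))"
      unfolding p_def d_def by (simp add: matrix_vector_mul_assoc matrix_mul_assoc)
    also have "\<dots> = (A *v d) \<bullet> (P *v (B *v (P *v (B *v (P *v (A *v d))))))" by (rule sym_dot[OF sA])
    also have "\<dots> = (P *v (A *v d)) \<bullet> (B *v (P *v (B *v (P *v (A *v d)))))" by (rule sym_dot[OF sP])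
    also have "\<dots> = h \<bullet> (P *v (B *v (P *v (A *v d))))" unfolding h_def by (rule sym_dot[OF sB])
    also have "\<dots> = h \<bullet> (P *v h)" unfolding h_def ..
    finally show ?thesis .
  qed
  show "X \<bullet> (A *v (x - mu1)) = s * p"
    unfolding g1 v vi by (simp add: inner_commute)
  show "X \<bullet> (B *v (x - mu2)) = - (1 - s) * p"
    unfolding g2 v vi by (simp add: inner_commute)
qed


lemma density_deriv:
  fixes A :: "real^'n^'n" and x :: "real \<Rightarrow> real^'n"
  assumes sA: "transpose A = A" and xd: "(x has_vector_derivative X) (at s)"
  shows "((\<lambda>t. c * exp (- (1/2) * ((x t - mu) \<bullet> (A *v (x t - mu))))) has_real_derivative
     (c * exp (- (1/2) * ((x s - mu) \<bullet> (A *v (x s - mu))))) * (- (X \<bullet> (A *v (x s - mu))))) (at s)"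
proof -
  have xd': "((\<lambda>t. x t - mu) has_vector_derivative X) (at s)"
    using xd by (simp add: has_vector_derivative_diff_const)
  have Ad: "((\<lambda>t. A *v (x t - mu)) has_vector_derivative A *v X) (at s)"
    by (rule bounded_linear.has_vector_derivative[OF matrix_vector_mul_bounded_linear xd'])
  have "((\<lambda>t. (x t - mu) \<bullet> (A *v (x t - mu))) has_vector_derivative
      (x s - mu) \<bullet> (A *v X) + X \<bullet> (A *v (x s - mu))) (at s)"
    by (rule bounded_bilinear.has_vector_derivative[OF bounded_bilinear_inner xd' Ad])
  moreover have "(x s - mu) \<bullet> (A *v X) = X \<bullet> (A *v (x s - mu))"
    by (simp add: sym_dot[OF sA] inner_commute)
  ultimately have qd: "((\<lambda>t. (x t - mu) \<bullet> (A *v (x t - mu))) has_real_derivative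
      2 * (X \<bullet> (A *v (x s - mu)))) (at s)"
    by (simp add: has_real_derivative_iff_has_vector_derivative)
  show ?thesis
    by (rule derivative_eq_intros qd refl | simp)+
qed


lemma final_alg:
  fixes F1 F2 p q a :: real
  assumes "F1 \<noteq> 0" "F2 \<noteq> 0"
  shows "((- p + (1 - a) * q + (1 - a) * (1 - a) * p * p) * F2) * (- a * p * F1) / (F2 * F1)
       - ((- p - a * q + a * a * p * p) * F1) * ((1 - a) * p * F2) / (F1 * F2)
       = p\<^sup>2 * (1 - a * (1 - a) * p)"
proof -
  have "((- p + (1 - a) * q + (1 - a) * (1 - a) * p * p) * F2) * (- a * p * F1) / (F2 * F1)
      = (- p + (1 - a) * q + (1 - a) * (1 - a) * p * p) * (- a * p)"
    using assms by (simp add: field_simps)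
  moreover have "((- p - a * q + a * a * p * p) * F1) * ((1 - a) * p * F2) / (F1 * F2)
      = (- p - a * q + a * a * p * p) * ((1 - a) * p)"
    using assms by (simp add: field_simps)
  ultimately show ?thesis by (simp add: power2_eq_square algebra_simps)
qed

theorem theorem3:
  fixes mu1 mu2 :: "real^'n" and Sig1 Sig2 :: "real^'n^'n" and a :: real
  assumes "pos_def_mat Sig1" and "pos_def_mat Sig2"
    and "0 \<le> a" and "a \<le> 1"
  shows "kappa mu1 Sig1 mu2 Sig2 a =
    (let Si = matrix_inv (S_mat Sig1 Sig2 a);
         d = mu2 - mu1;
         p = d \<bullet> ((matrix_inv Sig1 ** Si ** matrix_inv Sig2 ** Si ** matrix_inv Sig2
                    ** Si ** matrix_inv Sig1) *v d)
     in p\<^sup>2 * (1 - a * (1 - a) * p))"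
proof -
  define A where "A = matrix_inv Sig1"
  define B where "B = matrix_inv Sig2"
  have inv1: "invertible Sig1" and sA: "transpose A = A" and pdA: "\<And>v. v \<noteq> 0 \<Longrightarrow> v \<bullet> (A *v v) > 0"
    using pd_inv[OF assms(1)] unfolding A_def by auto
  have inv2: "invertible Sig2" and sB: "transpose B = B" and pdB: "\<And>v. v \<noteq> 0 \<Longrightarrow> v \<bullet> (B *v v) > 0"
    using pd_inv[OF assms(2)] unfolding B_def by auto
  have Sform: "\<And>t. S_mat Sig1 Sig2 t = A + t *\<^sub>R (B - A)"
    by (simp add: S_mat_def A_def B_def algebra_simps)
  have invS: "invertible (A + a *\<^sub>R (B - A))"
  proof (rule invertible_ker)
    fix v :: "real^'n" assume h: "(A + a *\<^sub>R (B - A)) *v v = 0"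
    show "v = 0"
    proof (rule ccontr)
      assume nz: "v \<noteq> 0"
      have "v \<bullet> ((A + a *\<^sub>R (B - A)) *v v) = (1 - a) * (v \<bullet> (A *v v)) + a * (v \<bullet> (B *v v))"
        by (simp only: mv_affine matrix_vector_mult_diff_rdistrib) (simp add: inner_diff_right algebra_simps)
      moreover have "(1 - a) * (v \<bullet> (A *v v)) + a * (v \<bullet> (B *v v)) > 0"
      proof (cases "a = 0")
        case True then show ?thesis using pdA[OF nz] by simp
      next
        case False
        then have "a > 0" using assms(3) by simp
        then have "a * (v \<bullet> (B *v v)) > 0" using pdB[OF nz] by simp
        moreover have "(1 - a) * (v \<bullet> (A *v v)) \<ge> 0" using pdA[OF nz] assms(4) by simp
        ultimately show ?thesis by simp
      qed
      ultimately show False using h by simp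
    qed
  qed
  obtain e where e: "e > 0" "\<And>s. \<bar>s - a\<bar> < e \<Longrightarrow> invertible (A + s *\<^sub>R (B - A))"
    using inv_near[OF invS] by blast
  define b where "b = (\<lambda>t. (1 - t) *\<^sub>R (A *v mu1) + t *\<^sub>R (B *v mu2))"
  define x where "x = ridgeline mu1 Sig1 mu2 Sig2"
  have x_eq: "x = (\<lambda>t. matrix_inv (A + t *\<^sub>R (B - A)) *v ((1 - t) *\<^sub>R (A *v mu1) + t *\<^sub>R (B *v mu2)))"
    unfolding x_def ridgeline_def Sform by (simp add: A_def B_def)
  have bd: "\<And>t. (b has_vector_derivative (B *v mu2 - A *v mu1)) (at t)"
  proof -
    fix t
    have "((\<lambda>t. (1 - t) *\<^sub>R (A *v mu1) + t *\<^sub>R (B *v mu2)) has_vector_derivative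
        ((1 - t) *\<^sub>R 0 + (0 - 1) *\<^sub>R (A *v mu1)) + (t *\<^sub>R 0 + 1 *\<^sub>R (B *v mu2))) (at t)"
      by (intro derivative_intros)
    then show "(b has_vector_derivative (B *v mu2 - A *v mu1)) (at t)"
      unfolding b_def by simp
  qed
  define X where "X = (\<lambda>s. matrix_inv (A + s *\<^sub>R (B - A)) *v ((B *v mu2 - A *v mu1) - (B - A) *v (x s)))"
  have xd: "(x has_vector_derivative X s) (at s)" if s: "\<bar>s - a\<bar> < e" for s
    using inv_deriv[OF e(2)[OF s] bd[of s]] unfolding X_def x_eq b_def by simp
  define p where "p = (\<lambda>s. (mu2 - mu1) \<bullet> ((A ** matrix_inv (A + s *\<^sub>R (B - A)) ** B ** matrix_inv (A + s *\<^sub>R (B - A))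
      ** B ** matrix_inv (A + s *\<^sub>R (B - A)) ** A) *v (mu2 - mu1)))"
  have alg: "X s \<bullet> (A *v (x s - mu1)) = s * p s \<and> X s \<bullet> (B *v (x s - mu2)) = - (1 - s) * p s"
    if s: "\<bar>s - a\<bar> < e" for s
    unfolding X_def x_eq p_def by (intro conjI ridge_alg[OF sA sB e(2)[OF s]])
  define c1 where "c1 = (2 * pi) powr (- real CARD('n) / 2) * (det Sig1) powr (-1/2)"
  define c2 where "c2 = (2 * pi) powr (- real CARD('n) / 2) * (det Sig2) powr (-1/2)"
  define f1 where "f1 = phi_ridge mu1 Sig1 mu2 Sig2 mu1 Sig1"
  define f2 where "f2 = phi_ridge mu1 Sig1 mu2 Sig2 mu2 Sig2"
  have f1_eq: "f1 = (\<lambda>t. c1 * exp (- (1/2) * ((x t - mu1) \<bullet> (A *v (x t - mu1)))))"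
    by (simp add: fun_eq_iff f1_def phi_ridge_def normal_density_def x_def A_def c1_def)
  have f2_eq: "f2 = (\<lambda>t. c2 * exp (- (1/2) * ((x t - mu2) \<bullet> (B *v (x t - mu2)))))"
    by (simp add: fun_eq_iff f2_def phi_ridge_def normal_density_def x_def B_def c2_def)
  have f1d: "(f1 has_real_derivative (- s * p s * f1 s)) (at s)" if s: "\<bar>s - a\<bar> < e" for s
    unfolding f1_eq
    by (rule DERIV_cong[OF density_deriv[OF sA xd[OF s]]]) (simp add: alg[OF s])
  have f2d: "(f2 has_real_derivative ((1 - s) * p s * f2 s)) (at s)" if s: "\<bar>s - a\<bar> < e" for s
    unfolding f2_eq
    by (rule DERIV_cong[OF density_deriv[OF sB xd[OF s]]]) (simp only: alg[OF s] minus_minus mult_minus_left, simp add: mult_ac)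
  have "\<exists>p'. (p has_real_derivative p') (at a)"
  proof -
    define P where "P = (\<lambda>t. matrix_inv (A + t *\<^sub>R (B - A)))"
    define d where "d = mu2 - mu1"
    obtain W1 where W1: "((\<lambda>t. P t *v (A *v d)) has_vector_derivative W1) (at a)"
      using inv_deriv[OF invS has_vector_derivative_const] unfolding P_def by blast
    obtain W2 where W2: "((\<lambda>t. P t *v (B *v (P t *v (A *v d)))) has_vector_derivative W2) (at a)"
      using inv_deriv[OF invS bounded_linear.has_vector_derivative[OF matrix_vector_mul_bounded_linear W1]]
      unfolding P_def by blast
    obtain W3 where W3: "((\<lambda>t. P t *v (B *v (P t *v (B *v (P t *v (A *v d)))))) has_vector_derivative W3) (at a)"
      using inv_deriv[OF invS bounded_linear.has_vector_derivative[OF matrix_vector_mul_bounded_linear W2]]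
      unfolding P_def by blast
    have "((\<lambda>t. d \<bullet> (A *v (P t *v (B *v (P t *v (B *v (P t *v (A *v d)))))))) has_vector_derivative
        d \<bullet> (A *v W3) + 0 \<bullet> (A *v (P a *v (B *v (P a *v (B *v (P a *v (A *v d)))))))) (at a)"
      by (rule bounded_bilinear.has_vector_derivative[OF bounded_bilinear_inner has_vector_derivative_const
            bounded_linear.has_vector_derivative[OF matrix_vector_mul_bounded_linear W3]])
    moreover have "p = (\<lambda>t. d \<bullet> (A *v (P t *v (B *v (P t *v (B *v (P t *v (A *v d))))))))"
      unfolding p_def P_def d_def by (simp add: matrix_vector_mul_assoc matrix_mul_assoc)
    ultimately show ?thesis by (auto simp: has_real_derivative_iff_has_vector_derivative)
  qed
  then obtain p' where pd: "(p has_real_derivative p') (at a)" by blast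
  have ev: "\<forall>\<^sub>F s in nhds a. \<bar>s - a\<bar> < e"
  proof -
    have "\<forall>\<^sub>F s in nhds a. s \<in> ball a e" by (rule eventually_nhds_in_open) (use e in auto)
    then show ?thesis by (rule eventually_mono) (simp add: dist_real_def abs_minus_commute)
  qed
  have a0: "\<bar>a - a\<bar> < e" using e by simp
  have df1a: "deriv f1 a = - a * p a * f1 a" by (rule DERIV_imp_deriv[OF f1d[OF a0]])
  have df2a: "deriv f2 a = (1 - a) * p a * f2 a" by (rule DERIV_imp_deriv[OF f2d[OF a0]])
  have "deriv (deriv f1) a = deriv (\<lambda>s. - s * p s * f1 s) a"
    by (rule deriv_cong_ev[OF eventually_mono[OF ev] refl]) (rule DERIV_imp_deriv[OF f1d])
  also have "\<dots> = (- p a - a * p' + a * a * p a * p a) * f1 a"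
  proof (rule DERIV_imp_deriv)
    show "((\<lambda>s. - s * p s * f1 s) has_real_derivative (- p a - a * p' + a * a * p a * p a) * f1 a) (at a)"
      by (rule DERIV_cong[OF DERIV_mult[OF DERIV_mult[OF DERIV_minus[OF DERIV_ident] pd] f1d[OF a0]]])
        (simp add: algebra_simps)
  qed
  finally have ddf1: "deriv (deriv f1) a = (- p a - a * p' + a * a * p a * p a) * f1 a" .
  have "deriv (deriv f2) a = deriv (\<lambda>s. (1 - s) * p s * f2 s) a"
    by (rule deriv_cong_ev[OF eventually_mono[OF ev] refl]) (rule DERIV_imp_deriv[OF f2d])
  also have "\<dots> = (- p a + (1 - a) * p' + (1 - a) * (1 - a) * p a * p a) * f2 a"
  proof (rule DERIV_imp_deriv)
    show "((\<lambda>s. (1 - s) * p s * f2 s) has_real_derivative (- p a + (1 - a) * p' + (1 - a) * (1 - a) * p a * p a) * f2 a) (at a)"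
      by (rule DERIV_cong[OF DERIV_mult[OF DERIV_mult[OF DERIV_diff[OF DERIV_const DERIV_ident] pd] f2d[OF a0]]])
        (simp add: algebra_simps)
  qed
  finally have ddf2: "deriv (deriv f2) a = (- p a + (1 - a) * p' + (1 - a) * (1 - a) * p a * p a) * f2 a" .
  have dn1: "det Sig1 \<noteq> 0" using inv1 invertible_det_nz by blast
  have dn2: "det Sig2 \<noteq> 0" using inv2 invertible_det_nz by blast
  have F1: "f1 a \<noteq> 0" unfolding f1_eq c1_def using dn1 by simp
  have F2: "f2 a \<noteq> 0" unfolding f2_eq c2_def using dn2 by simp
  have rhs: "(let Si = matrix_inv (S_mat Sig1 Sig2 a);
         d = mu2 - mu1;
         p = d \<bullet> ((matrix_inv Sig1 ** Si ** matrix_inv Sig2 ** Si ** matrix_inv Sig2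
                    ** Si ** matrix_inv Sig1) *v d)
     in p\<^sup>2 * (1 - a * (1 - a) * p)) = (p a)\<^sup>2 * (1 - a * (1 - a) * p a)"
    unfolding Let_def Sform p_def A_def B_def ..
  have "kappa mu1 Sig1 mu2 Sig2 a = deriv (deriv f2) a * deriv f1 a / (f2 a * f1 a)
         - deriv (deriv f1) a * deriv f2 a / (f1 a * f2 a)"
    unfolding kappa_def Let_def f1_def f2_def ..
  also have "\<dots> = (p a)\<^sup>2 * (1 - a * (1 - a) * p a)"
    unfolding ddf1 ddf2 df1a df2a by (rule final_alg[OF F1 F2])
  finally show ?thesis using rhs by simp
qed

end
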